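(* Let $\Gamma_1=(u\xrightarrow{p}x\xrightarrow{q}v)$ be a path of length $2$ in $B(\mathfrak S_n)$, and let $\Gamma_2=(u\xrightarrow{s}y\xrightarrow{t}v)$ be the flip of $\Gamma_1$. Then: (1) if $p$ and $q$ commute, then $s=q$ and $t=p$; (2) if $p=(a,b)$ and $q=(a,c)$ (with $a,b,c$ distinct), then: - if $a<b<c$ or $a>b>c$, then $s=(b,c)$ and $t=(a,b)$; - if $a<c<b$ or $a>c>b$, then $s=(a,c)$ and $t=(b,c)$; - if $b<a<c$ or $b>a>c$, then: if $u^{-1}(b)<u^{-1}(a)<u^{-1}(c)$ or $u^{-1}(c)<u^{-1}(a)<u^{-1}(b)$, then $s=(a,c)$ and $t=(b,c)$; otherwise $s=(b,c)$ and $t=(a,b)$.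
   Context: $\mathfrak S_n$ is the symmetric group on $[n]$, $T$ its set of transpositions, $\ell$ the length w.r.t. simple transpositions $(i,i+1)$. The Bruhat graph $B(\mathfrak S_n)$ is the edge-labelled directed graph on $\mathfrak S_n$ with an edge $x\xrightarrow{t}y$ iff $yx^{-1}=t\in T$ and $\ell(x)<\ell(y)$. For any $x,y\in\mathfrak S_n$ the number of paths of length $2$ from $x$ to $y$ in $B(\mathfrak S_n)$ is $0$ or $2$; if $\Gamma$ is one of two such paths, the other one is called the flip of $\Gamma$. $u^{-1}$ is the inverse permutation. *)

theory Defs
  imports "HOL-Combinatorics.Combinatorics"
begin

definition Sym :: "nat \<Rightarrow> (nat \<Rightarrow> nat) set" where
  "Sym n = {w. w permutes {1..n}}"

definition Transp :: "nat \<Rightarrow> (nat \<Rightarrow> nat) set" where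
  "Transp n = {transpose a b | a b. a \<in> {1..n} \<and> b \<in> {1..n} \<and> a \<noteq> b}"

definition simple_word :: "nat list \<Rightarrow> nat \<Rightarrow> nat" where
  "simple_word is = foldr (\<lambda>i f. transpose i (Suc i) \<circ> f) is id"

definition len :: "nat \<Rightarrow> (nat \<Rightarrow> nat) \<Rightarrow> nat" where
  "len n w = (LEAST k. \<exists>is. length is = k \<and> (\<forall>i\<in>set is. 1 \<le> i \<and> i < n) \<and> w = simple_word is)"

definition bruhat_edge :: "nat \<Rightarrow> (nat \<Rightarrow> nat) \<Rightarrow> (nat \<Rightarrow> nat) \<Rightarrow> (nat \<Rightarrow> nat) \<Rightarrow> bool" where
  "bruhat_edge n x t y \<longleftrightarrow> x \<in> Sym n \<and> y \<in> Sym n \<and> t \<in> Transp n \<and> y \<circ> inv x = t \<and> len n x < len n y"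

end

theory Submission
  imports Defs
begin

definition Inv :: "nat \<Rightarrow> (nat \<Rightarrow> nat) \<Rightarrow> (nat \<times> nat) set" where
  "Inv n w = {(x,y). x \<in> {1..n} \<and> y \<in> {1..n} \<and> x < y \<and> inv w y < inv w x}"

definition gmap :: "nat \<Rightarrow> nat \<Rightarrow> nat \<times> nat \<Rightarrow> nat \<times> nat" where
  "gmap a b p = (if a < fst p \<and> fst p < b \<or> a < snd p \<and> snd p < b then p
     else (min (transpose a b (fst p)) (transpose a b (snd p)), max (transpose a b (fst p)) (transpose a b (snd p))))"

lemma finite_Inv: "finite (Inv n w)"
  by (rule finite_subset[of _ "{1..n} \<times> {1..n}"]) (auto simp: Inv_def)

lemma inv_tw: "bij w \<Longrightarrow> inv (transpose a b \<circ> w) = inv w \<circ> transpose a b"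
  by (simp add: o_inv_distrib)

lemma gmap_inj: "a < b \<Longrightarrow> inj_on (gmap a b) {(x,y). x < y}"
  unfolding inj_on_def gmap_def transpose_def
  by (auto split: if_splits simp: min_def max_def)

lemma gmap_adj:
  assumes "bij w" "a \<in> {1..n}" "Suc a \<in> {1..n}"
  shows "gmap a (Suc a) ` Inv n (transpose a (Suc a) \<circ> w) \<subseteq> insert (a, Suc a) (Inv n w)"
  using assms unfolding Inv_def inv_tw[OF assms(1)] gmap_def transpose_def
  by (auto split: if_splits simp: min_def max_def)

lemma gmap_down:
  assumes "bij w" "a \<in> {1..n}" "b \<in> {1..n}" "a < b" "inv w b < inv w a"
  shows "gmap a b ` Inv n (transpose a b \<circ> w) \<subseteq> Inv n w - {(a,b)}"
  using assms unfolding Inv_def inv_tw[OF assms(1)] gmap_def transpose_def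
  by (auto split: if_splits simp: min_def max_def)

lemma card_adj:
  assumes "bij w" "a \<in> {1..n}" "Suc a \<in> {1..n}"
  shows "card (Inv n (transpose a (Suc a) \<circ> w)) \<le> card (Inv n w) + 1"
proof -
  have "inj_on (gmap a (Suc a)) (Inv n (transpose a (Suc a) \<circ> w))"
    by (rule inj_on_subset[OF gmap_inj]) (auto simp: Inv_def)
  then have "card (Inv n (transpose a (Suc a) \<circ> w)) = card (gmap a (Suc a) ` Inv n (transpose a (Suc a) \<circ> w))"
    by (simp add: card_image)
  also have "\<dots> \<le> card (insert (a, Suc a) (Inv n w))"
    by (rule card_mono[OF _ gmap_adj[OF assms]]) (simp add: finite_Inv)
  also have "\<dots> \<le> card (Inv n w) + 1" by (simp add: card_insert_if finite_Inv)
  finally show ?thesis .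
qed

lemma card_down:
  assumes "bij w" "a \<in> {1..n}" "b \<in> {1..n}" "a < b" "inv w b < inv w a"
  shows "card (Inv n (transpose a b \<circ> w)) < card (Inv n w)"
proof -
  have "inj_on (gmap a b) (Inv n (transpose a b \<circ> w))"
    by (rule inj_on_subset[OF gmap_inj[OF assms(4)]]) (auto simp: Inv_def)
  then have "card (Inv n (transpose a b \<circ> w)) = card (gmap a b ` Inv n (transpose a b \<circ> w))"
    by (simp add: card_image)
  also have "\<dots> \<le> card (Inv n w - {(a,b)})"
    by (rule card_mono[OF _ gmap_down[OF assms]]) (simp add: finite_Inv)
  also have "\<dots> < card (Inv n w)"
    using assms by (intro card_Diff1_less finite_Inv) (auto simp: Inv_def)
  finally show ?thesis .
qed

lemma sw_Cons: "simple_word (i # is) = transpose i (Suc i) \<circ> simple_word is"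
  by (simp add: simple_word_def)

lemma sw_Nil: "simple_word [] = id"
  by (simp add: simple_word_def)

lemma sw_bij: "bij (simple_word is)"
proof (induction "is")
  case Nil show ?case unfolding sw_Nil by (rule bij_id)
next
  case (Cons i "is") show ?case unfolding sw_Cons by (rule bij_comp[OF Cons.IH bij_transpose])
qed

lemma sw_card: "\<forall>i\<in>set is. 1 \<le> i \<and> i < n \<Longrightarrow> card (Inv n (simple_word is)) \<le> length is"
proof (induction "is")
  case Nil
  have "Inv n (simple_word []) = {}" by (auto simp: Inv_def sw_Nil)
  then show ?case by simp
next
  case (Cons i "is")
  have "card (Inv n (simple_word (i # is))) \<le> card (Inv n (simple_word is)) + 1"
    unfolding sw_Cons using Cons.prems by (intro card_adj sw_bij) auto
  then show ?case using Cons by auto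
qed

lemma no_desc:
  assumes w: "w permutes {1..n}" and nd: "\<And>i. 1 \<le> i \<Longrightarrow> i < n \<Longrightarrow> inv w i < inv w (Suc i)"
  shows "w = id"
proof -
  let ?P = "inv w"
  have P: "?P permutes {1..n}" using w by (rule permutes_inv)
  have mono: "?P i < ?P j" if "1 \<le> i" "i < j" "j \<le> n" for i j
    using that
  proof (induction j)
    case 0 then show ?case by simp
  next
    case (Suc j)
    show ?case
    proof (cases "i = j")
      case True then show ?thesis using nd Suc.prems by auto
    next
      case False
      then have "?P i < ?P j" using Suc by auto
      also have "?P j < ?P (Suc j)" using nd Suc.prems by auto
      finally show ?thesis .
    qed
  qed
  have inP: "?P k \<in> {1..n}" if "k \<in> {1..n}" for k
    using permutes_in_image[OF P] that by blast
  have ge: "k \<le> ?P k" if "1 \<le> k" "k \<le> n" for k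
    using that
  proof (induction k)
    case 0 then show ?case by simp
  next
    case (Suc k)
    show ?case
    proof (cases "k = 0")
      case True then show ?thesis using inP[of 1] Suc.prems by auto
    next
      case False
      then have "k \<le> ?P k" using Suc by auto
      moreover have "?P k < ?P (Suc k)" using mono[of k "Suc k"] False Suc.prems by auto
      ultimately show ?thesis by simp
    qed
  qed
  have le: "?P (n - m) \<le> n - m" if "m < n" for m
    using that
  proof (induction m)
    case 0 then show ?case using inP[of n] by auto
  next
    case (Suc m)
    have "?P (n - Suc m) < ?P (n - m)" using mono[of "n - Suc m" "n - m"] Suc.prems by auto
    moreover have "?P (n - m) \<le> n - m" using Suc by auto
    ultimately show ?case using Suc.prems by linarith
  qed
  have "?P k = k" for k
  proof (cases "k \<in> {1..n}")
    case True
    then have "?P k \<le> k" using le[of "n - k"] by auto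
    then show ?thesis using ge[of k] True by auto
  next
    case False then show ?thesis using P by (simp add: permutes_not_in)
  qed
  then have "?P = id" by auto
  then show ?thesis using w
    by (metis inv_id inv_inv_eq permutes_bij)
qed

lemma word_exists:
  "w permutes {1..n} \<Longrightarrow> \<exists>is. length is \<le> card (Inv n w) \<and> (\<forall>i\<in>set is. 1 \<le> i \<and> i < n) \<and> w = simple_word is"
proof (induction "card (Inv n w)" arbitrary: w rule: less_induct)
  case less
  show ?case
  proof (cases "w = id")
    case True then show ?thesis by (intro exI[of _ "[]"]) (simp add: sw_Nil)
  next
    case False
    then obtain i where i: "1 \<le> i" "i < n" "\<not> inv w i < inv w (Suc i)"
      using no_desc[OF less.prems] by blast
    have bw: "bij w" using less.prems by (rule permutes_bij)
    have "inv w i \<noteq> inv w (Suc i)"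
      using bw by (metis bij_inv_eq_iff n_not_Suc_n)
    then have d: "inv w (Suc i) < inv w i" using i by auto
    let ?w' = "transpose i (Suc i) \<circ> w"
    have w': "?w' permutes {1..n}"
      using less.prems i by (intro permutes_compose permutes_swap_id) auto
    have lt: "card (Inv n ?w') < card (Inv n w)"
      using i d by (intro card_down bw) auto
    obtain is' where is': "length is' \<le> card (Inv n ?w')" "\<forall>i\<in>set is'. 1 \<le> i \<and> i < n" "?w' = simple_word is'"
      using less.hyps[OF lt w'] by blast
    have "w = simple_word (i # is')"
      unfolding sw_Cons is'(3)[symmetric] by (simp add: comp_assoc[symmetric])
    then show ?thesis using is' lt i by (intro exI[of _ "i # is'"]) auto
  qed
qed

lemma len_eq: "w permutes {1..n} \<Longrightarrow> len n w = card (Inv n w)"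
proof -
  assume w: "w permutes {1..n}"
  obtain ws where ws: "length ws \<le> card (Inv n w)" "\<forall>i\<in>set ws. 1 \<le> i \<and> i < n" "w = simple_word ws"
    using word_exists[OF w] by blast
  let ?Q = "\<lambda>k. \<exists>is. length is = k \<and> (\<forall>i\<in>set is. 1 \<le> i \<and> i < n) \<and> w = simple_word is"
  have "?Q (length ws)" using ws by blast
  then have le: "len n w \<le> length ws" unfolding len_def by (rule Least_le)
  have "?Q (len n w)" unfolding len_def using \<open>?Q (length ws)\<close> by (rule LeastI)
  then obtain js where "length js = len n w" "\<forall>i\<in>set js. 1 \<le> i \<and> i < n" "w = simple_word js" by blast
  then have "card (Inv n w) \<le> len n w" using sw_card by metis
  then show ?thesis using le ws by linarith
qed

lemma edge_comp: "bruhat_edge n w t w2 \<Longrightarrow> w2 = t \<circ> w"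
proof -
  assume e: "bruhat_edge n w t w2"
  then have w: "w permutes {1..n}" and t: "w2 \<circ> inv w = t" by (auto simp: bruhat_edge_def Sym_def)
  have "inv w \<circ> w = id" using permutes_inv_o(2)[OF w] .
  then have "w2 = (w2 \<circ> inv w) \<circ> w" by (simp add: comp_assoc)
  then show ?thesis using t by simp
qed

lemma transp_pts: "transpose a b \<in> Transp n \<Longrightarrow> a \<noteq> b \<Longrightarrow> a \<in> {1..n} \<and> b \<in> {1..n}"
  unfolding Transp_def
proof clarify
  fix a' b' assume h: "transpose a b = transpose a' b'" "a \<noteq> b" "a' \<in> {1..n}" "b' \<in> {1..n}" "a' \<noteq> b'"
  have "transpose a b a = b" "transpose a b b = a" by auto
  then have "transpose a' b' a \<noteq> a" "transpose a' b' b \<noteq> b" using h by auto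
  then have "a \<in> {a', b'}" "b \<in> {a',b'}" by (auto simp: transpose_def split: if_splits)
  then show "a \<in> {1..n} \<and> b \<in> {1..n}" using h by auto
qed
lemma up:
  assumes e: "bruhat_edge n w (transpose a b) w2" and ab: "a < b"
  shows "inv w a < inv w b"
proof (rule ccontr)
  assume nl: "\<not> inv w a < inv w b"
  have w: "w permutes {1..n}" and w2: "w2 permutes {1..n}" and tr: "transpose a b \<in> Transp n"
    and l: "len n w < len n w2"
    using e by (auto simp: bruhat_edge_def Sym_def)
  have bw: "bij w" using w by (rule permutes_bij)
  have "inv w a \<noteq> inv w b" using ab bw by (metis bij_inv_eq_iff less_irrefl)
  then have d: "inv w b < inv w a" using nl by auto
  have pts: "a \<in> {1..n}" "b \<in> {1..n}" using transp_pts[OF tr] ab by auto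
  have "card (Inv n (transpose a b \<circ> w)) < card (Inv n w)"
    by (rule card_down[OF bw pts ab d])
  then have "len n w2 < len n w"
    using len_eq[OF w] len_eq[OF w2] edge_comp[OF e] by simp
  then show False using l by simp
qed

lemma up2:
  assumes e: "bruhat_edge n w (transpose a b) w2"
  shows "(a < b \<longrightarrow> inv w a < inv w b) \<and> (b < a \<longrightarrow> inv w b < inv w a)"
  using up[OF e] up[of n w b a w2] e by (auto simp: transpose_commute)

lemma tr_eq: "transpose g h f = e \<Longrightarrow> e \<noteq> f \<Longrightarrow> transpose g h = transpose e f"
  by (auto simp: transpose_def fun_eq_iff split: if_splits)

lemma supp_e:
  assumes "transpose g h \<circ> transpose e f = \<sigma>" "e \<noteq> f" "\<sigma> e = e"
  shows "\<sigma> = id"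
proof -
  have "transpose g h f = e" using assms by (metis comp_apply transpose_apply_first)
  then have "transpose g h = transpose e f" using assms(2) by (rule tr_eq)
  then show ?thesis using assms(1) by simp
qed

lemma supp:
  assumes "transpose g h \<circ> transpose e f = \<sigma>" "e \<noteq> f" "\<sigma> \<noteq> id"
  shows "\<sigma> e \<noteq> e" "\<sigma> f \<noteq> f"
  using supp_e[OF assms(1,2)] supp_e[of g h f e \<sigma>] assms by (auto simp: transpose_commute)

lemma h1: "a \<noteq> b \<Longrightarrow> a \<noteq> c \<Longrightarrow> b \<noteq> c \<Longrightarrow> transpose a c \<circ> transpose a b \<circ> transpose b c = transpose a b"
  by (auto simp: fun_eq_iff transpose_def)
lemma h2: "a \<noteq> b \<Longrightarrow> a \<noteq> c \<Longrightarrow> b \<noteq> c \<Longrightarrow> transpose a c \<circ> transpose a b \<circ> transpose a c = transpose b c"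
  by (auto simp: fun_eq_iff transpose_def)
lemma h0: "transpose a c \<circ> transpose a b \<circ> transpose a b = transpose a c"
  by (simp add: comp_assoc)

lemma alg2:
  assumes st: "transpose g h \<circ> transpose e f = transpose a c \<circ> transpose a b"
    and d: "a \<noteq> b" "a \<noteq> c" "b \<noteq> c" "e \<noteq> f"
  shows "(transpose e f = transpose a b \<and> transpose g h = transpose a c)
       \<or> (transpose e f = transpose b c \<and> transpose g h = transpose a b)
       \<or> (transpose e f = transpose a c \<and> transpose g h = transpose b c)"
proof -
  let ?\<sigma> = "transpose a c \<circ> transpose a b"
  have ni: "?\<sigma> \<noteq> id" using d by (auto simp: fun_eq_iff transpose_def intro!: exI[of _ a])
  have "?\<sigma> e \<noteq> e" "?\<sigma> f \<noteq> f" using supp[OF st d(4) ni] by auto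
  then have ef: "e \<in> {a,b,c}" "f \<in> {a,b,c}" by (auto simp: transpose_def split: if_splits)
  have t: "transpose g h = ?\<sigma> \<circ> transpose e f"
    using st by (metis comp_assoc comp_id transpose_comp_involutory)
  have "transpose e f = transpose a b \<or> transpose e f = transpose b c \<or> transpose e f = transpose a c"
    using ef d(4) by (auto simp: transpose_commute)
  then show ?thesis unfolding t using h0[of a c b] h1[OF d(1-3)] h2[OF d(1-3)] by auto
qed

lemma disj:
  assumes "a \<noteq> b" "c \<noteq> d" "transpose a b \<noteq> transpose c d"
    and cm: "transpose a b \<circ> transpose c d = transpose c d \<circ> transpose a b"
  shows "a \<noteq> c \<and> a \<noteq> d \<and> b \<noteq> c \<and> b \<noteq> d"
proof -
  have 1: "transpose a b (transpose c d z) = transpose c d (transpose a b z)" for z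
    using cm by (metis comp_apply)
  show ?thesis using 1[of a] 1[of b] 1[of c] 1[of d] assms(1-3)
    by (auto simp: transpose_def split: if_splits)
qed

lemma alg1:
  assumes st: "transpose g h \<circ> transpose e f = transpose c d \<circ> transpose a b"
    and d: "a \<noteq> b" "c \<noteq> d" "e \<noteq> f" "transpose a b \<noteq> transpose c d"
    and cm: "transpose a b \<circ> transpose c d = transpose c d \<circ> transpose a b"
  shows "transpose e f = transpose a b \<or> (transpose e f = transpose c d \<and> transpose g h = transpose a b)"
proof -
  have dj: "a \<noteq> c" "a \<noteq> d" "b \<noteq> c" "b \<noteq> d" using disj[OF d(1,2,4) cm] by auto
  let ?\<sigma> = "transpose c d \<circ> transpose a b"
  have ni: "?\<sigma> \<noteq> id" using d dj by (auto simp: fun_eq_iff transpose_def intro!: exI[of _ a])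
  have "?\<sigma> e \<noteq> e" "?\<sigma> f \<noteq> f" using supp[OF st d(3) ni] by auto
  then have ef: "e \<in> {a,b,c,d}" "f \<in> {a,b,c,d}" by (auto simp: transpose_def split: if_splits)
  have t: "transpose g h = ?\<sigma> \<circ> transpose e f"
    using st by (metis comp_assoc comp_id transpose_comp_involutory)
  have iv: "(?\<sigma> \<circ> transpose e f) ((?\<sigma> \<circ> transpose e f) z) = z" for z
    unfolding t[symmetric] by simp
  have cases: "transpose e f = transpose a b \<or> transpose e f = transpose c d"
  proof (rule ccontr)
    assume "\<not> ?thesis"
    then have "\<not> ({e,f} = {a,b} \<or> {e,f} = {c,d})" by (auto simp: transpose_commute doubleton_eq_iff)
    then show False using ef d(3) iv[of e] iv[of f] dj d(1,2)
      by (auto simp: transpose_def split: if_splits)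
  qed
  have "?\<sigma> \<circ> transpose c d = transpose a b"
    using cm by (metis comp_assoc comp_id transpose_comp_involutory)
  then show ?thesis using cases unfolding t by auto
qed

lemma tne: "a \<noteq> b \<Longrightarrow> a \<noteq> c \<Longrightarrow> b \<noteq> c \<Longrightarrow>
   transpose b c \<noteq> transpose a c \<and> transpose a b \<noteq> transpose b c \<and> transpose a c \<noteq> transpose a b"
  by (auto simp: fun_eq_iff transpose_def)

lemma arithA:
  fixes a b c i j k :: nat
  assumes "a \<noteq> b" "a \<noteq> c" "b \<noteq> c" "i \<noteq> j" "i \<noteq> k" "j \<noteq> k"
   "(a < b \<longrightarrow> i < j) \<and> (b < a \<longrightarrow> j < i)"
   "(a < c \<longrightarrow> j < k) \<and> (c < a \<longrightarrow> k < j)"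
   "(b < c \<longrightarrow> j < k) \<and> (c < b \<longrightarrow> k < j)"
   "(a < b \<longrightarrow> i < k) \<and> (b < a \<longrightarrow> k < i)"
  shows "\<not> (a < c \<and> c < b \<or> a > c \<and> c > b) \<and> ((b < a \<and> a < c \<or> b > a \<and> a > c) \<longrightarrow> \<not> (j < i \<and> i < k \<or> k < i \<and> i < j))"
  using assms by arith
lemma arithB:
  fixes a b c i j k :: nat
  assumes "a \<noteq> b" "a \<noteq> c" "b \<noteq> c" "i \<noteq> j" "i \<noteq> k" "j \<noteq> k"
   "(a < b \<longrightarrow> i < j) \<and> (b < a \<longrightarrow> j < i)"
   "(a < c \<longrightarrow> j < k) \<and> (c < a \<longrightarrow> k < j)"
   "(a < c \<longrightarrow> i < k) \<and> (c < a \<longrightarrow> k < i)"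
   "(b < c \<longrightarrow> j < i) \<and> (c < b \<longrightarrow> i < j)"
  shows "\<not> (a < b \<and> b < c \<or> a > b \<and> b > c) \<and> ((b < a \<and> a < c \<or> b > a \<and> a > c) \<longrightarrow> (j < i \<and> i < k \<or> k < i \<and> i < j))"
  using assms by arith

theorem proposition3p6:
  fixes n :: nat and u x y v p q s t :: "nat \<Rightarrow> nat"
  assumes G1a: "bruhat_edge n u p x" and G1b: "bruhat_edge n x q v"
    and G2a: "bruhat_edge n u s y" and G2b: "bruhat_edge n y t v"
    and flip: "y \<noteq> x"
  shows "(p \<circ> q = q \<circ> p \<longrightarrow> s = q \<and> t = p)
    \<and> (\<forall>a b c. p = transpose a b \<and> q = transpose a c \<and> a \<noteq> b \<and> a \<noteq> c \<and> b \<noteq> c \<longrightarrow>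
         ((a < b \<and> b < c \<or> a > b \<and> b > c) \<longrightarrow> s = transpose b c \<and> t = transpose a b)
       \<and> ((a < c \<and> c < b \<or> a > c \<and> c > b) \<longrightarrow> s = transpose a c \<and> t = transpose b c)
       \<and> ((b < a \<and> a < c \<or> b > a \<and> a > c) \<longrightarrow>
            (if inv u b < inv u a \<and> inv u a < inv u c \<or> inv u c < inv u a \<and> inv u a < inv u b
             then s = transpose a c \<and> t = transpose b c
             else s = transpose b c \<and> t = transpose a b)))"
proof -
  have ex: "x = p \<circ> u" "v = q \<circ> x" "y = s \<circ> u" "v = t \<circ> y"
    using edge_comp[OF G1a] edge_comp[OF G1b] edge_comp[OF G2a] edge_comp[OF G2b] by auto
  have uperm: "u permutes {1..n}" using G1a by (auto simp: bruhat_edge_def Sym_def)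
  then have bu: "bij u" by (rule permutes_bij)
  have uid: "u \<circ> inv u = id" using permutes_inv_o(1)[OF uperm] .
  have "t \<circ> s \<circ> u = q \<circ> p \<circ> u" using ex by (simp add: comp_assoc)
  then have "t \<circ> s \<circ> u \<circ> inv u = q \<circ> p \<circ> u \<circ> inv u" by simp
  then have qp: "t \<circ> s = q \<circ> p" by (simp add: comp_assoc uid)
  have sp: "s \<noteq> p" using flip ex by auto
  have lens: "len n u < len n x" "len n x < len n v"
    using G1a G1b by (auto simp: bruhat_edge_def)
  have Ts: "s \<in> Transp n" "t \<in> Transp n" "p \<in> Transp n" "q \<in> Transp n"
    using G1a G1b G2a G2b by (auto simp: bruhat_edge_def)
  obtain e f where s: "s = transpose e f" "e \<noteq> f" using Ts(1) by (auto simp: Transp_def)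
  obtain g h where t: "t = transpose g h" using Ts(2) by (auto simp: Transp_def)
  have part1: "p \<circ> q = q \<circ> p \<longrightarrow> s = q \<and> t = p"
  proof
    assume cm: "p \<circ> q = q \<circ> p"
    obtain a1 b1 where p: "p = transpose a1 b1" "a1 \<noteq> b1" using Ts(3) by (auto simp: Transp_def)
    obtain c1 d1 where q: "q = transpose c1 d1" "c1 \<noteq> d1" using Ts(4) by (auto simp: Transp_def)
    have "p \<noteq> q"
    proof
      assume "p = q"
      then have "v = (p \<circ> p) \<circ> u" using ex by (simp add: comp_assoc)
      moreover have "p \<circ> p = id" using p by simp
      ultimately have "v = u" by simp
      then show False using lens by simp
    qed
    then show "s = q \<and> t = p"
      using alg1[of g h e f c1 d1 a1 b1] qp s t p q cm sp by auto
  qed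
  have part2: "\<forall>a b c. p = transpose a b \<and> q = transpose a c \<and> a \<noteq> b \<and> a \<noteq> c \<and> b \<noteq> c \<longrightarrow>
         ((a < b \<and> b < c \<or> a > b \<and> b > c) \<longrightarrow> s = transpose b c \<and> t = transpose a b)
       \<and> ((a < c \<and> c < b \<or> a > c \<and> c > b) \<longrightarrow> s = transpose a c \<and> t = transpose b c)
       \<and> ((b < a \<and> a < c \<or> b > a \<and> a > c) \<longrightarrow>
            (if inv u b < inv u a \<and> inv u a < inv u c \<or> inv u c < inv u a \<and> inv u a < inv u b
             then s = transpose a c \<and> t = transpose b c
             else s = transpose b c \<and> t = transpose a b))"
  proof (intro allI impI)
    fix a b c
    assume H: "p = transpose a b \<and> q = transpose a c \<and> a \<noteq> b \<and> a \<noteq> c \<and> b \<noteq> c"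
    then have p: "p = transpose a b" and q: "q = transpose a c" and d: "a \<noteq> b" "a \<noteq> c" "b \<noteq> c" by auto
    have ne: "transpose b c \<noteq> transpose a c" "transpose a b \<noteq> transpose b c" "transpose a c \<noteq> transpose a b"
      using tne[OF d] by auto
    note ne = ne ne[symmetric]
    have invx: "inv x = inv u \<circ> p" using ex(1) bu p by (simp add: inv_tw)
    have invy: "inv y = inv u \<circ> s" using ex(3) bu s by (simp add: inv_tw)
    have injd: "inv u a \<noteq> inv u b" "inv u a \<noteq> inv u c" "inv u b \<noteq> inv u c"
      using d bu by (metis bij_inv_eq_iff)+
    have e1: "(a < b \<longrightarrow> inv u a < inv u b) \<and> (b < a \<longrightarrow> inv u b < inv u a)"
      using up2[of n u a b x] G1a p by simp
    have e2: "(a < c \<longrightarrow> inv u b < inv u c) \<and> (c < a \<longrightarrow> inv u c < inv u b)"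
      using up2[of n x a c v] G1b q invx p d by simp
    have "(s = transpose a b \<and> t = transpose a c) \<or> (s = transpose b c \<and> t = transpose a b)
       \<or> (s = transpose a c \<and> t = transpose b c)"
      using alg2[of g h e f a c b] qp s t p q d by auto
    then consider (A) "s = transpose b c" "t = transpose a b" | (B) "s = transpose a c" "t = transpose b c"
      using sp p by auto
    then show "((a < b \<and> b < c \<or> a > b \<and> b > c) \<longrightarrow> s = transpose b c \<and> t = transpose a b)
       \<and> ((a < c \<and> c < b \<or> a > c \<and> c > b) \<longrightarrow> s = transpose a c \<and> t = transpose b c)
       \<and> ((b < a \<and> a < c \<or> b > a \<and> a > c) \<longrightarrow>
            (if inv u b < inv u a \<and> inv u a < inv u c \<or> inv u c < inv u a \<and> inv u a < inv u b
             then s = transpose a c \<and> t = transpose b c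
             else s = transpose b c \<and> t = transpose a b))"
    proof cases
      case A
      have e3: "(b < c \<longrightarrow> inv u b < inv u c) \<and> (c < b \<longrightarrow> inv u c < inv u b)"
        using up2[of n u b c y] G2a A by simp
      have e4: "(a < b \<longrightarrow> inv u a < inv u c) \<and> (b < a \<longrightarrow> inv u c < inv u a)"
        using up2[of n y a b v] G2b A invy d by simp
      have ar: "\<not> (a < c \<and> c < b \<or> a > c \<and> c > b) \<and> ((b < a \<and> a < c \<or> b > a \<and> a > c) \<longrightarrow> \<not> (inv u b < inv u a \<and> inv u a < inv u c \<or> inv u c < inv u a \<and> inv u a < inv u b))"
        by (rule arithA[OF d injd e1 e2 e3 e4])
      show ?thesis using ar by (simp add: A ne) (blast dest: less_asym)
    next
      case B
      have e3: "(a < c \<longrightarrow> inv u a < inv u c) \<and> (c < a \<longrightarrow> inv u c < inv u a)"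
        using up2[of n u a c y] G2a B by simp
      have e4: "(b < c \<longrightarrow> inv u b < inv u a) \<and> (c < b \<longrightarrow> inv u a < inv u b)"
        using up2[of n y b c v] G2b B invy d by simp
      have ar: "\<not> (a < b \<and> b < c \<or> a > b \<and> b > c) \<and> ((b < a \<and> a < c \<or> b > a \<and> a > c) \<longrightarrow> (inv u b < inv u a \<and> inv u a < inv u c \<or> inv u c < inv u a \<and> inv u a < inv u b))"
        by (rule arithB[OF d injd e1 e2 e3 e4])
      show ?thesis using ar by (simp add: B ne)
    qed
  qed
  show ?thesis using part1 part2 by blast
qed

end
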